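(* Fix $n \ge 2$. If $x_1, x_2, \dots, x_n$ is a sequence of positive real numbers with mean $\mu = \frac1n\sum_{i=1}^n x_i$ and variance $\sigma^2 = \frac1n\sum_{i=1}^n (x_i-\mu)^2$ (with $\sigma\ge 0$), then $$\mu - (x_1 x_2 \cdots x_n)^{1/n} \le \sqrt{n-1}\,\sigma.$$ *)

theory Defs
  imports Complex_Main
begin

end

theory Submission
  imports Defs
begin

theorem corollary1:
  fixes n :: nat and x :: "nat \<Rightarrow> real" and \<mu> \<sigma> :: real
  assumes "n \<ge> 2"
    and "\<And>i. i \<in> {1..n} \<Longrightarrow> x i > 0"
    and "\<mu> = (\<Sum>i=1..n. x i) / real n"
    and "\<sigma> \<ge> 0"
    and "\<sigma>^2 = (\<Sum>i=1..n. (x i - \<mu>)^2) / real n"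
  shows "\<mu> - root n (\<Prod>i=1..n. x i) \<le> sqrt (real n - 1) * \<sigma>"
proof -
  define I where "I = {1..n}"
  have fin: "finite I" and ne: "I \<noteq> {}" using assms(1) by (auto simp: I_def)
  define k where "k = arg_min_on x I"
  have kI: "k \<in> I" and kmin: "\<And>i. i \<in> I \<Longrightarrow> x k \<le> x i"
    using arg_min_if_finite[OF fin ne, of x] unfolding k_def
    by (auto simp: not_less)
  have pos: "x k > 0" using assms(2) kI by (auto simp: I_def)
  have "x k ^ n = (\<Prod>i\<in>I. x k)" by (simp add: I_def)
  also have "\<dots> \<le> (\<Prod>i\<in>I. x i)"
    by (rule prod_mono) (use pos kmin in \<open>auto intro: less_imp_le\<close>)
  finally have "x k ^ n \<le> (\<Prod>i\<in>I. x i)" .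
  hence "root n (x k ^ n) \<le> root n (\<Prod>i=1..n. x i)"
    using assms(1) by (simp add: I_def)
  hence G: "x k \<le> root n (\<Prod>i=1..n. x i)"
    using assms(1) pos by (simp add: real_root_power_cancel)
  define d where "d j = x j - \<mu>" for j
  define A where "A = I - {k}"
  define m where "m = real n - 1"
  have cardA: "card A = n - 1" using kI by (simp add: A_def I_def)
  have mpos: "m > 0" using assms(1) by (simp add: m_def)
  have mA: "real (card A) = m" using cardA assms(1) by (simp add: m_def of_nat_diff)
  have nz: "real n \<noteq> 0" using assms(1) by simp
  have sumd: "(\<Sum>j\<in>I. d j) = 0"
    using nz by (simp add: d_def sum_subtractf assms(3) I_def)
  have splitI: "\<And>f. (\<Sum>j\<in>I. f j) = f k + (\<Sum>j\<in>A. f j)"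
    using fin kI unfolding A_def by (simp add: sum.remove)
  have S1: "(\<Sum>j\<in>A. d j) = - d k" using sumd splitI[of d] by simp
  define c where "c = - d k / m"
  have "0 \<le> (\<Sum>j\<in>A. (d j - c)^2)" by (simp add: sum_nonneg)
  also have "(\<Sum>j\<in>A. (d j - c)^2) = (\<Sum>j\<in>A. (d j)^2) - 2*c*(\<Sum>j\<in>A. d j) + m*c^2"
    by (simp add: power2_diff sum.distrib sum_subtractf sum_distrib_left sum_distrib_right mA[symmetric] algebra_simps)
  also have "\<dots> = (\<Sum>j\<in>A. (d j)^2) - (d k)^2 / m"
    using mpos by (simp add: S1 c_def power2_eq_square field_simps)
  finally have S2: "(d k)^2 / m \<le> (\<Sum>j\<in>A. (d j)^2)" by simp
  have "real n * \<sigma>^2 = (\<Sum>j\<in>I. (d j)^2)"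
    using nz by (simp add: assms(5) d_def I_def)
  also have "\<dots> = (d k)^2 + (\<Sum>j\<in>A. (d j)^2)" by (rule splitI)
  finally have "(d k)^2 / m + (d k)^2 \<le> real n * \<sigma>^2" using S2 by simp
  hence "(d k)^2 * (1/m + 1) \<le> real n * \<sigma>^2" by (simp add: algebra_simps)
  moreover have "1/m + 1 = real n / m" using mpos by (simp add: field_simps m_def)
  ultimately have "(d k)^2 * real n / m \<le> real n * \<sigma>^2" by simp
  hence "(d k)^2 * real n \<le> real n * \<sigma>^2 * m" using mpos by (simp add: field_simps)
  hence D: "(d k)^2 \<le> m * \<sigma>^2" using assms(1) by (simp add: algebra_simps)
  have "- d k \<le> sqrt ((d k)^2)" by simp
  also have "\<dots> \<le> sqrt (m * \<sigma>^2)" using D by (rule real_sqrt_le_mono)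
  also have "\<dots> = sqrt m * \<sigma>" using assms(4) mpos by (simp add: real_sqrt_mult)
  finally have "\<mu> - x k \<le> sqrt m * \<sigma>" by (simp add: d_def)
  thus ?thesis using G by (simp add: m_def)
qed

end
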